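(* For two swm-graphs $G$ and $H$, the thickening of the Cartesian product equals the strong product of the thickenings: $(G\times H)^{\varDelta}=G^{\varDelta}\otimes H^{\varDelta}$.
   Context: Graphs are connected, simple, undirected, possibly infinite; $d$ is the shortest-path metric. Weakly modular graph: (TC) for vertices $x,y,z$ with $d(x,y)=1$ and $d(x,z)=d(y,z)$ there is a common neighbor $u$ of $x,y$ with $d(u,z)=d(x,z)-1$; (QC) for $x,y,w,z$ with $d(x,y)=2$, $d(w,x)=d(w,y)=1$, $d(w,z)-1=d(x,z)=d(y,z)$ there is a common neighbor $u$ of $x,y$ with $d(u,z)=d(x,z)-1$. An swm-graph is a weakly modular graph with no induced $K_4^-$ and no isometric $K_{3,3}^-$ subgraph ($K_4$, $K_{3,3}$ minus one edge). A nonempty vertex set $X$ is gated if for every vertex $x$ there is $y\in X$ with $d(x,z)=d(x,y)+d(y,z)$ for all $z\in X$; it is Boolean-gated if it is gated and induces a connected thick subgraph (any two vertices at distance 2 have two common neighbors at distance 2 from each other). The thickening $G^{\varDelta}$ is obtained from $G$ by joining every pair of distinct vertices lying in a common Boolean-gated set. The Cartesian product $G\times H$ has vertex set $V(G)\times V(H)$ with $(x,y)\sim(x',y')$ iff ($x=x'$ and $yy'\in E(H)$) or ($y=y'$ and $xx'\in E(G)$). The strong product $G\otimes H$ has vertex set $V(G)\times V(H)$ with distinct $(x,y),(x',y')$ adjacent iff $x,x'$ are equal or adjacent and $y,y'$ are equal or adjacent. *)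

theory Defs
  imports Main
begin

text \<open>A graph is given by its adjacency relation on the vertex type (vertex set = UNIV).
  Simple undirected: symmetric and irreflexive; connected: any two vertices joined by a walk.\<close>

definition graph :: "('a \<Rightarrow> 'a \<Rightarrow> bool) \<Rightarrow> bool" where
  "graph E \<longleftrightarrow> (\<forall>x y. E x y \<longrightarrow> E y x) \<and> (\<forall>x. \<not> E x x)
      \<and> (\<forall>x y. \<exists>n. (E ^^ n) x y)"

definition gdist :: "('a \<Rightarrow> 'a \<Rightarrow> bool) \<Rightarrow> 'a \<Rightarrow> 'a \<Rightarrow> nat" where
  "gdist E x y = (LEAST n. (E ^^ n) x y)"

definition triangle_cond :: "('a \<Rightarrow> 'a \<Rightarrow> bool) \<Rightarrow> bool" where
  "triangle_cond E \<longleftrightarrow> (\<forall>x y z. gdist E x y = 1 \<and> gdist E x z = gdist E y z \<longrightarrow>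
     (\<exists>u. E u x \<and> E u y \<and> gdist E u z = gdist E x z - 1))"

definition quadrangle_cond :: "('a \<Rightarrow> 'a \<Rightarrow> bool) \<Rightarrow> bool" where
  "quadrangle_cond E \<longleftrightarrow> (\<forall>x y w z. gdist E x y = 2 \<and> gdist E w x = 1 \<and> gdist E w y = 1
     \<and> gdist E w z - 1 = gdist E x z \<and> gdist E x z = gdist E y z \<longrightarrow>
     (\<exists>u. E u x \<and> E u y \<and> gdist E u z = gdist E x z - 1))"

definition weakly_modular :: "('a \<Rightarrow> 'a \<Rightarrow> bool) \<Rightarrow> bool" where
  "weakly_modular E \<longleftrightarrow> graph E \<and> triangle_cond E \<and> quadrangle_cond E"

definition has_induced_K4minus :: "('a \<Rightarrow> 'a \<Rightarrow> bool) \<Rightarrow> bool" where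
  "has_induced_K4minus E \<longleftrightarrow> (\<exists>a b c d. distinct [a, b, c, d] \<and>
     E a b \<and> E a c \<and> E a d \<and> E b c \<and> E b d \<and> \<not> E c d)"

text \<open>Isometric K33 minus an edge: six distinct vertices x1 x2 x3 y1 y2 y3 with all edges
  xi yj except x1 y1 present, and the graph distance between any two of them equal to their
  distance in K33 minus x1y1 (1 for the edges, 2 inside a side, 3 between x1 and y1).\<close>
definition has_isometric_K33minus :: "('a \<Rightarrow> 'a \<Rightarrow> bool) \<Rightarrow> bool" where
  "has_isometric_K33minus E \<longleftrightarrow> (\<exists>x1 x2 x3 y1 y2 y3. distinct [x1, x2, x3, y1, y2, y3] \<and>
     E x1 y2 \<and> E x1 y3 \<and> E x2 y1 \<and> E x2 y2 \<and> E x2 y3 \<and> E x3 y1 \<and> E x3 y2 \<and> E x3 y3 \<and>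
     gdist E x1 y2 = 1 \<and> gdist E x1 y3 = 1 \<and> gdist E x2 y1 = 1 \<and> gdist E x2 y2 = 1 \<and>
     gdist E x2 y3 = 1 \<and> gdist E x3 y1 = 1 \<and> gdist E x3 y2 = 1 \<and> gdist E x3 y3 = 1 \<and>
     gdist E x1 x2 = 2 \<and> gdist E x1 x3 = 2 \<and> gdist E x2 x3 = 2 \<and>
     gdist E y1 y2 = 2 \<and> gdist E y1 y3 = 2 \<and> gdist E y2 y3 = 2 \<and>
     gdist E x1 y1 = 3)"

definition swm_graph :: "('a \<Rightarrow> 'a \<Rightarrow> bool) \<Rightarrow> bool" where
  "swm_graph E \<longleftrightarrow> weakly_modular E \<and> \<not> has_induced_K4minus E \<and> \<not> has_isometric_K33minus E"

definition gated :: "('a \<Rightarrow> 'a \<Rightarrow> bool) \<Rightarrow> 'a set \<Rightarrow> bool" where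
  "gated E X \<longleftrightarrow> X \<noteq> {} \<and> (\<forall>x. \<exists>y\<in>X. \<forall>z\<in>X. gdist E x z = gdist E x y + gdist E y z)"

definition induced :: "('a \<Rightarrow> 'a \<Rightarrow> bool) \<Rightarrow> 'a set \<Rightarrow> 'a \<Rightarrow> 'a \<Rightarrow> bool" where
  "induced E X u v \<longleftrightarrow> u \<in> X \<and> v \<in> X \<and> E u v"

definition connected_thick_on :: "('a \<Rightarrow> 'a \<Rightarrow> bool) \<Rightarrow> 'a set \<Rightarrow> bool" where
  "connected_thick_on E X \<longleftrightarrow>
     (\<forall>u\<in>X. \<forall>v\<in>X. \<exists>n. (induced E X ^^ n) u v) \<and>
     (\<forall>u\<in>X. \<forall>v\<in>X. gdist (induced E X) u v = 2 \<longrightarrow>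
        (\<exists>w\<in>X. \<exists>w'\<in>X. induced E X u w \<and> induced E X w v \<and> induced E X u w' \<and> induced E X w' v
           \<and> gdist (induced E X) w w' = 2))"

definition boolean_gated :: "('a \<Rightarrow> 'a \<Rightarrow> bool) \<Rightarrow> 'a set \<Rightarrow> bool" where
  "boolean_gated E X \<longleftrightarrow> gated E X \<and> connected_thick_on E X"

definition thickening :: "('a \<Rightarrow> 'a \<Rightarrow> bool) \<Rightarrow> 'a \<Rightarrow> 'a \<Rightarrow> bool" where
  "thickening E u v \<longleftrightarrow> u \<noteq> v \<and> (\<exists>X. boolean_gated E X \<and> u \<in> X \<and> v \<in> X)"

definition cartesian_prod :: "('a \<Rightarrow> 'a \<Rightarrow> bool) \<Rightarrow> ('b \<Rightarrow> 'b \<Rightarrow> bool) \<Rightarrow> ('a \<times> 'b) \<Rightarrow> ('a \<times> 'b) \<Rightarrow> bool" where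
  "cartesian_prod E F p q \<longleftrightarrow> (fst p = fst q \<and> F (snd p) (snd q)) \<or> (snd p = snd q \<and> E (fst p) (fst q))"

definition strong_prod :: "('a \<Rightarrow> 'a \<Rightarrow> bool) \<Rightarrow> ('b \<Rightarrow> 'b \<Rightarrow> bool) \<Rightarrow> ('a \<times> 'b) \<Rightarrow> ('a \<times> 'b) \<Rightarrow> bool" where
  "strong_prod E F p q \<longleftrightarrow> p \<noteq> q \<and> (fst p = fst q \<or> E (fst p) (fst q)) \<and> (snd p = snd q \<or> F (snd p) (snd q))"

end

theory Submission
  imports Defs
begin

lemma gdist_le: "(E ^^ n) x y \<Longrightarrow> gdist E x y \<le> n"
  unfolding gdist_def by (rule Least_le)

lemma gdist_pow: "\<exists>n. (E ^^ n) x y \<Longrightarrow> (E ^^ gdist E x y) x y"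
  unfolding gdist_def by (rule LeastI_ex)

lemma gdist_0: "\<exists>n. (E ^^ n) x y \<Longrightarrow> gdist E x y = 0 \<Longrightarrow> x = y"
  using gdist_pow by fastforce

lemma gdist_refl: "gdist E x x = 0"
  using gdist_le[where E=E and n=0 and x=x and y=x] by simp

lemma gdist_1: "E x y \<Longrightarrow> x \<noteq> y \<Longrightarrow> gdist E x y = 1"
proof -
  assume a: "E x y" "x \<noteq> y"
  have r: "(E ^^ 1) x y" using a by (simp only: relpowp_1)
  have "gdist E x y \<le> 1" using gdist_le[OF r] .
  moreover have "gdist E x y \<noteq> 0" using gdist_0[of E x y] r a by blast
  ultimately show ?thesis by simp
qed

lemma gdist_1D: "\<exists>n. (E ^^ n) x y \<Longrightarrow> gdist E x y = 1 \<Longrightarrow> E x y"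
  using gdist_pow by fastforce

lemma gdist_tri:
  assumes "\<exists>n. (E ^^ n) x y" "\<exists>n. (E ^^ n) y z"
  shows "gdist E x z \<le> gdist E x y + gdist E y z"
proof -
  have "(E ^^ (gdist E x y + gdist E y z)) x z"
    using gdist_pow[OF assms(1)] gdist_pow[OF assms(2)] unfolding relpowp_add by blast
  then show ?thesis by (rule gdist_le)
qed

lemma pow_sym: "\<forall>x y. E x y \<longrightarrow> E y x \<Longrightarrow> (E ^^ n) x y \<Longrightarrow> (E ^^ n) y x"
proof (induction n arbitrary: y)
  case 0 then show ?case by simp
next
  case (Suc n)
  then obtain r where "(E ^^ n) x r" "E r y" by (auto elim: relpowp_Suc_E)
  then show ?case using Suc by (meson relpowp_Suc_I2)
qed

lemma gdist_sym: "\<forall>x y. E x y \<longrightarrow> E y x \<Longrightarrow> gdist E x y = gdist E y x"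
  unfolding gdist_def by (metis pow_sym)

lemma cp_pow_fst: "(E ^^ i) a a' \<Longrightarrow> (cartesian_prod E F ^^ i) (a,b) (a',b)"
proof (induction i arbitrary: a')
  case 0 then show ?case by simp
next
  case (Suc i)
  then obtain r where r: "(E ^^ i) a r" "E r a'" by (auto elim: relpowp_Suc_E)
  have "(cartesian_prod E F ^^ i) (a,b) (r,b)" using Suc.IH r(1) .
  moreover have "cartesian_prod E F (r,b) (a',b)" using r(2) by (simp add: cartesian_prod_def)
  ultimately show ?case by (rule relpowp_Suc_I)
qed

lemma cp_pow_snd: "(F ^^ j) b b' \<Longrightarrow> (cartesian_prod E F ^^ j) (a,b) (a,b')"
proof (induction j arbitrary: b')
  case 0 then show ?case by simp
next
  case (Suc j)
  then obtain r where r: "(F ^^ j) b r" "F r b'" by (auto elim: relpowp_Suc_E)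
  have "(cartesian_prod E F ^^ j) (a,b) (a,r)" using Suc.IH r(1) .
  moreover have "cartesian_prod E F (a,r) (a,b')" using r(2) by (simp add: cartesian_prod_def)
  ultimately show ?case by (rule relpowp_Suc_I)
qed

lemma cp_pow: "(E ^^ i) a a' \<Longrightarrow> (F ^^ j) b b' \<Longrightarrow> (cartesian_prod E F ^^ (i + j)) (a,b) (a',b')"
proof -
  assume a: "(E ^^ i) a a'" "(F ^^ j) b b'"
  have "(cartesian_prod E F ^^ i) (a,b) (a',b)" using cp_pow_fst a(1) .
  moreover have "(cartesian_prod E F ^^ j) (a',b) (a',b')" using cp_pow_snd a(2) .
  ultimately show ?thesis unfolding relpowp_add by blast
qed

lemma cp_pow_split: "(cartesian_prod E F ^^ n) p q \<Longrightarrow>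
   \<exists>i j. i + j = n \<and> (E ^^ i) (fst p) (fst q) \<and> (F ^^ j) (snd p) (snd q)"
proof (induction n arbitrary: q)
  case 0 then show ?case by simp
next
  case (Suc n)
  then obtain r where r: "(cartesian_prod E F ^^ n) p r" "cartesian_prod E F r q" by (auto elim: relpowp_Suc_E)
  then obtain i j where ij: "i + j = n" "(E ^^ i) (fst p) (fst r)" "(F ^^ j) (snd p) (snd r)" using Suc by blast
  show ?case
  proof (cases "fst r = fst q \<and> F (snd r) (snd q)")
    case True
    then have "i + Suc j = Suc n" "(E ^^ i) (fst p) (fst q)" "(F ^^ Suc j) (snd p) (snd q)"
      using ij by (auto intro: relpowp_Suc_I)
    then show ?thesis by blast
  next
    case False
    then have "snd r = snd q \<and> E (fst r) (fst q)" using r(2) by (auto simp: cartesian_prod_def)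
    then have "Suc i + j = Suc n" "(E ^^ Suc i) (fst p) (fst q)" "(F ^^ j) (snd p) (snd q)"
      using ij by (auto intro: relpowp_Suc_I)
    then show ?thesis by blast
  qed
qed

lemma cp_gdist:
  assumes "\<exists>i. (E ^^ i) a a'" "\<exists>j. (F ^^ j) b b'"
  shows "gdist (cartesian_prod E F) (a,b) (a',b') = gdist E a a' + gdist F b b'"
proof -
  have w: "(cartesian_prod E F ^^ (gdist E a a' + gdist F b b')) (a,b) (a',b')"
    using cp_pow[OF gdist_pow[OF assms(1)] gdist_pow[OF assms(2)]] .
  then have le: "gdist (cartesian_prod E F) (a,b) (a',b') \<le> gdist E a a' + gdist F b b'"
    by (rule gdist_le)
  have "(cartesian_prod E F ^^ gdist (cartesian_prod E F) (a,b) (a',b')) (a,b) (a',b')"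
    by (rule gdist_pow) (rule exI, rule w)
  then obtain i j where "i + j = gdist (cartesian_prod E F) (a,b) (a',b')" "(E ^^ i) a a'" "(F ^^ j) b b'"
    using cp_pow_split by fastforce
  then have "gdist E a a' + gdist F b b' \<le> gdist (cartesian_prod E F) (a,b) (a',b')"
    using gdist_le[where E=E and n=i and x=a and y=a'] gdist_le[where E=F and n=j and x=b and y=b'] by linarith
  then show ?thesis using le by linarith
qed

lemma pow_eq_on:
  assumes "\<forall>p\<in>A. \<forall>q. R p q \<longleftrightarrow> S p q" "\<forall>p q. p \<in> A \<longrightarrow> R p q \<longrightarrow> q \<in> A"
  shows "p \<in> A \<Longrightarrow> (R ^^ n) p q = (S ^^ n) p q"
proof (induction n arbitrary: p)
  case 0 then show ?case by simp
next
  case (Suc n)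
  show ?case
  proof
    assume h: "(R ^^ Suc n) p q"
    obtain r where "R p r" "(R ^^ n) r q" using relpowp_Suc_D2[OF h] by blast
    then show "(S ^^ Suc n) p q" using Suc assms by (meson relpowp_Suc_I2)
  next
    assume h: "(S ^^ Suc n) p q"
    obtain r where "S p r" "(S ^^ n) r q" using relpowp_Suc_D2[OF h] by blast
    then show "(R ^^ Suc n) p q" using Suc assms by (meson relpowp_Suc_I2)
  qed
qed

lemma induced_cp_pow:
  "p \<in> X1 \<times> X2 \<Longrightarrow> (induced (cartesian_prod G H) (X1 \<times> X2) ^^ n) p q
     = (cartesian_prod (induced G X1) (induced H X2) ^^ n) p q"
  by (rule pow_eq_on) (auto simp: induced_def cartesian_prod_def)

lemma induced_cp_gdist:
  assumes "(a,b) \<in> X1 \<times> X2"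
    and "\<exists>i. (induced G X1 ^^ i) a a'" "\<exists>j. (induced H X2 ^^ j) b b'"
  shows "gdist (induced (cartesian_prod G H) (X1 \<times> X2)) (a,b) (a',b')
     = gdist (induced G X1) a a' + gdist (induced H X2) b b'"
proof -
  have "gdist (induced (cartesian_prod G H) (X1 \<times> X2)) (a,b) (a',b')
     = gdist (cartesian_prod (induced G X1) (induced H X2)) (a,b) (a',b')"
    unfolding gdist_def using induced_cp_pow[OF assms(1)] by simp
  then show ?thesis using cp_gdist assms by metis
qed

lemma graph_conn: "graph G \<Longrightarrow> \<exists>n. (G ^^ n) x y"
  unfolding graph_def by blast

lemma graph_gdist:
  assumes "graph G" "graph H"
  shows "gdist (cartesian_prod G H) (a,b) (a',b') = gdist G a a' + gdist H b b'"
  by (rule cp_gdist[OF graph_conn[OF assms(1)] graph_conn[OF assms(2)]])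

lemma prod_bg:
  assumes G: "graph G" and H: "graph H"
    and B1: "boolean_gated G X1" and B2: "boolean_gated H X2"
  shows "boolean_gated (cartesian_prod G H) (X1 \<times> X2)"
proof -
  let ?A = "X1 \<times> X2"
  let ?R = "induced (cartesian_prod G H) ?A"
  let ?g = "induced G X1" and ?h = "induced H X2"
  have g1: "gated G X1" and c1: "connected_thick_on G X1" using B1 by (auto simp: boolean_gated_def)
  have g2: "gated H X2" and c2: "connected_thick_on H X2" using B2 by (auto simp: boolean_gated_def)
  have cg: "\<exists>n. (?g ^^ n) u v" if "u \<in> X1" "v \<in> X1" for u v
    using c1 that unfolding connected_thick_on_def by blast
  have ch: "\<exists>n. (?h ^^ n) u v" if "u \<in> X2" "v \<in> X2" for u v
    using c2 that unfolding connected_thick_on_def by blast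
  have D: "gdist ?R (a,b) (a',b') = gdist ?g a a' + gdist ?h b b'"
    if "a \<in> X1" "b \<in> X2" "a' \<in> X1" "b' \<in> X2" for a b a' b'
    by (rule induced_cp_gdist) (use that cg ch in auto)
  have symg: "\<forall>x y. ?g x y \<longrightarrow> ?g y x" using G unfolding graph_def induced_def by blast
  have symh: "\<forall>x y. ?h x y \<longrightarrow> ?h y x" using H unfolding graph_def induced_def by blast
  have gated: "gated (cartesian_prod G H) ?A"
    unfolding gated_def
  proof (intro conjI allI)
    show "?A \<noteq> {}" using g1 g2 by (auto simp: gated_def)
  next
    fix x :: "'a \<times> 'b"
    obtain x1 x2 where x: "x = (x1,x2)" by (cases x)
    obtain y1 where y1: "y1 \<in> X1" "\<forall>z\<in>X1. gdist G x1 z = gdist G x1 y1 + gdist G y1 z"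
      using g1 unfolding gated_def by blast
    obtain y2 where y2: "y2 \<in> X2" "\<forall>z\<in>X2. gdist H x2 z = gdist H x2 y2 + gdist H y2 z"
      using g2 unfolding gated_def by blast
    show "\<exists>y\<in>?A. \<forall>z\<in>?A. gdist (cartesian_prod G H) x z
            = gdist (cartesian_prod G H) x y + gdist (cartesian_prod G H) y z"
    proof (intro bexI ballI)
      fix z assume "z \<in> ?A"
      then obtain z1 z2 where z: "z = (z1,z2)" "z1 \<in> X1" "z2 \<in> X2" by auto
      show "gdist (cartesian_prod G H) x z
            = gdist (cartesian_prod G H) x (y1,y2) + gdist (cartesian_prod G H) (y1,y2) z"
      proof -
        have "gdist G x1 z1 = gdist G x1 y1 + gdist G y1 z1" using y1(2) z(2) by blast
        moreover have "gdist H x2 z2 = gdist H x2 y2 + gdist H y2 z2" using y2(2) z(3) by blast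
        ultimately show ?thesis unfolding x z(1) graph_gdist[OF G H] by linarith
      qed
    qed (use y1 y2 in auto)
  qed
  have conn: "\<forall>u\<in>?A. \<forall>v\<in>?A. \<exists>n. (?R ^^ n) u v"
  proof (intro ballI)
    fix u v assume u: "u \<in> ?A" and v: "v \<in> ?A"
    have "fst u \<in> X1" "fst v \<in> X1" "snd u \<in> X2" "snd v \<in> X2" using u v by auto
    then obtain i j where i: "(?g ^^ i) (fst u) (fst v)" and j: "(?h ^^ j) (snd u) (snd v)"
      using cg ch by blast
    have "(cartesian_prod ?g ?h ^^ (i+j)) u v" using cp_pow[OF i j] by simp
    then show "\<exists>n. (?R ^^ n) u v" using induced_cp_pow[OF u, where n="i+j" and q=v and G=G and H=H] by blast
  qed
  have thick: "\<forall>u\<in>?A. \<forall>v\<in>?A. gdist ?R u v = 2 \<longrightarrow>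
        (\<exists>w\<in>?A. \<exists>w'\<in>?A. ?R u w \<and> ?R w v \<and> ?R u w' \<and> ?R w' v \<and> gdist ?R w w' = 2)"
  proof (intro ballI impI)
    fix u v assume u: "u \<in> ?A" and v: "v \<in> ?A" and d2: "gdist ?R u v = 2"
    obtain a b where ab: "u = (a,b)" "a \<in> X1" "b \<in> X2" using u by auto
    obtain a' b' where ab': "v = (a',b')" "a' \<in> X1" "b' \<in> X2" using v by auto
    have s: "gdist ?g a a' + gdist ?h b b' = 2" using d2 D ab ab' by simp
    consider "gdist ?g a a' = 2" "gdist ?h b b' = 0" | "gdist ?g a a' = 1" "gdist ?h b b' = 1"
      | "gdist ?g a a' = 0" "gdist ?h b b' = 2" using s by linarith
    then show "\<exists>w\<in>?A. \<exists>w'\<in>?A. ?R u w \<and> ?R w v \<and> ?R u w' \<and> ?R w' v \<and> gdist ?R w w' = 2"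
    proof cases
      case 1
      have bb: "b = b'" using gdist_0[OF ch[OF ab(3) ab'(3)]] 1(2) by simp
      obtain w1 w1' where w: "w1 \<in> X1" "w1' \<in> X1" "?g a w1" "?g w1 a'" "?g a w1'" "?g w1' a'"
          "gdist ?g w1 w1' = 2"
        using c1 ab(2) ab'(2) 1(1) unfolding connected_thick_on_def by blast
      have "gdist ?R (w1,b) (w1',b) = 2" using D[of w1 b w1' b] w ab by (simp add: gdist_refl)
      then show ?thesis using w ab ab' bb
        by (intro bexI[of _ "(w1,b)"] bexI[of _ "(w1',b)"]) (auto simp: induced_def cartesian_prod_def)
    next
      case 2
      have e1: "?g a a'" using gdist_1D[OF cg[OF ab(2) ab'(2)]] 2(1) .
      have e2: "?h b b'" using gdist_1D[OF ch[OF ab(3) ab'(3)]] 2(2) .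
      have "gdist ?g a' a = 1" using 2(1) gdist_sym[OF symg, of a a'] by simp
      then have "gdist ?R (a',b) (a,b') = 2" using D[of a' b a b'] ab ab' 2 by simp
      then show ?thesis using ab ab' e1 e2
        by (intro bexI[of _ "(a',b)"] bexI[of _ "(a,b')"]) (auto simp: induced_def cartesian_prod_def)
    next
      case 3
      have aa: "a = a'" using gdist_0[OF cg[OF ab(2) ab'(2)]] 3(1) by simp
      obtain w1 w1' where w: "w1 \<in> X2" "w1' \<in> X2" "?h b w1" "?h w1 b'" "?h b w1'" "?h w1' b'"
          "gdist ?h w1 w1' = 2"
        using c2 ab(3) ab'(3) 3(2) unfolding connected_thick_on_def by blast
      have "gdist ?R (a,w1) (a,w1') = 2" using D[of a w1 a w1'] w ab by (simp add: gdist_refl)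
      then show ?thesis using w ab ab' aa
        by (intro bexI[of _ "(a,w1)"] bexI[of _ "(a,w1')"]) (auto simp: induced_def cartesian_prod_def)
    qed
  qed
  show ?thesis unfolding boolean_gated_def connected_thick_on_def
    using gated conn thick by blast
qed


lemma cp_irr_step:
  assumes G: "graph G" and H: "graph H"
    and r1: "cartesian_prod G H (u,b0) (c,d)" and r2: "cartesian_prod G H (c,d) (v,b0)"
    and uv: "u \<noteq> v"
  shows "d = b0 \<and> G u c \<and> G c v"
  using assms unfolding graph_def cartesian_prod_def by auto

lemma cp_irr_step2:
  assumes G: "graph G" and H: "graph H"
    and r1: "cartesian_prod G H (a0,u) (c,d)" and r2: "cartesian_prod G H (c,d) (a0,v)"
    and uv: "u \<noteq> v"
  shows "c = a0 \<and> H u d \<and> H d v"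
  using assms unfolding graph_def cartesian_prod_def by auto

lemma gated_prod_eq:
  assumes G: "graph G" and H: "graph H" and X: "gated (cartesian_prod G H) X"
  shows "X = fst ` X \<times> snd ` X"
proof
  show "X \<subseteq> fst ` X \<times> snd ` X" by (auto intro: rev_image_eqI)
next
  show "fst ` X \<times> snd ` X \<subseteq> X"
  proof
    fix x assume "x \<in> fst ` X \<times> snd ` X"
    then obtain a b' b0 a0 where x: "x = (a,b')" and m: "(a,b0) \<in> X" "(a0,b') \<in> X"
      by (auto simp: image_iff)
    obtain y where y: "y \<in> X" "\<forall>z\<in>X. gdist (cartesian_prod G H) x z
        = gdist (cartesian_prod G H) x y + gdist (cartesian_prod G H) y z"
      using X unfolding gated_def by blast
    obtain y1 y2 where yy: "y = (y1,y2)" by (cases y)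
    have "gdist (cartesian_prod G H) (a,b') (a,b0) = gdist (cartesian_prod G H) (a,b') (y1,y2)
          + gdist (cartesian_prod G H) (y1,y2) (a,b0)" using y(2) m(1) x yy by blast
    then have e1: "gdist H b' b0 = gdist G a y1 + gdist H b' y2 + gdist G y1 a + gdist H y2 b0"
      unfolding graph_gdist[OF G H] gdist_refl by simp
    have "gdist (cartesian_prod G H) (a,b') (a0,b') = gdist (cartesian_prod G H) (a,b') (y1,y2)
          + gdist (cartesian_prod G H) (y1,y2) (a0,b')" using y(2) m(2) x yy by blast
    then have e2: "gdist G a a0 = gdist G a y1 + gdist H b' y2 + gdist G y1 a0 + gdist H y2 b'"
      unfolding graph_gdist[OF G H] gdist_refl by simp
    have t1: "gdist H b' b0 \<le> gdist H b' y2 + gdist H y2 b0"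
      by (rule gdist_tri) (use graph_conn[OF H] in auto)
    have t2: "gdist G a a0 \<le> gdist G a y1 + gdist G y1 a0"
      by (rule gdist_tri) (use graph_conn[OF G] in auto)
    have "gdist G a y1 = 0" using e1 t1 by linarith
    then have "a = y1" using gdist_0 graph_conn[OF G] by metis
    moreover have "gdist H b' y2 = 0" using e2 t2 by linarith
    then have "b' = y2" using gdist_0 graph_conn[OF H] by metis
    ultimately show "x \<in> X" using y(1) x yy by simp
  qed
qed

lemma proj_fst:
  assumes G: "graph G" and H: "graph H" and B: "boolean_gated (cartesian_prod G H) X"
  shows "boolean_gated G (fst ` X)"
proof -
  define X1 where "X1 = fst ` X"
  define X2 where "X2 = snd ` X"
  let ?A = "X1 \<times> X2"
  let ?R = "induced (cartesian_prod G H) ?A"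
  let ?g = "induced G X1" and ?h = "induced H X2"
  have gX: "gated (cartesian_prod G H) X" and cX: "connected_thick_on (cartesian_prod G H) X"
    using B by (auto simp: boolean_gated_def)
  have XA: "X = ?A" using gated_prod_eq[OF G H gX] unfolding X1_def X2_def .
  have ne: "X \<noteq> {}" using gX by (auto simp: gated_def)
  then obtain b0 where b0: "b0 \<in> X2" unfolding X2_def by auto
  have gated: "gated G X1"
    unfolding gated_def
  proof (intro conjI allI)
    show "X1 \<noteq> {}" using ne unfolding X1_def by auto
  next
    fix x1
    obtain y where y: "y \<in> X" "\<forall>z\<in>X. gdist (cartesian_prod G H) (x1,b0) z
        = gdist (cartesian_prod G H) (x1,b0) y + gdist (cartesian_prod G H) y z"
      using gX unfolding gated_def by blast
    obtain y1 y2 where yy: "y = (y1,y2)" by (cases y)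
    have y1: "y1 \<in> X1" using y(1) yy unfolding X1_def by force
    show "\<exists>y\<in>X1. \<forall>z\<in>X1. gdist G x1 z = gdist G x1 y + gdist G y z"
    proof (intro bexI[OF _ y1] ballI)
      fix z assume z: "z \<in> X1"
      then have "(z,b0) \<in> X" using XA b0 by simp
      then have "gdist (cartesian_prod G H) (x1,b0) (z,b0) = gdist (cartesian_prod G H) (x1,b0) (y1,y2)
          + gdist (cartesian_prod G H) (y1,y2) (z,b0)" using y(2) yy by blast
      then have e: "gdist G x1 z = gdist G x1 y1 + gdist H b0 y2 + gdist G y1 z + gdist H y2 b0"
        unfolding graph_gdist[OF G H] gdist_refl by simp
      have t: "gdist G x1 z \<le> gdist G x1 y1 + gdist G y1 z"
        by (rule gdist_tri) (use graph_conn[OF G] in auto)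
      show "gdist G x1 z = gdist G x1 y1 + gdist G y1 z" using e t by linarith
    qed
  qed
  have cR: "\<exists>n. (?R ^^ n) u v" if "u \<in> ?A" "v \<in> ?A" for u v
    using cX that XA unfolding connected_thick_on_def by auto
  have cg: "\<exists>n. (?g ^^ n) u v" if u: "u \<in> X1" and v: "v \<in> X1" for u v
  proof -
    obtain n where "(?R ^^ n) (u,b0) (v,b0)" using cR u v b0 by blast
    then have "(cartesian_prod ?g ?h ^^ n) (u,b0) (v,b0)"
      using induced_cp_pow[of "(u,b0)" X1 X2 n G H "(v,b0)"] u b0 by simp
    then show ?thesis using cp_pow_split by fastforce
  qed
  have ch0: "\<exists>n. (?h ^^ n) b0 b0" by (rule exI[of _ 0]) simp
  have D: "gdist ?R (a,b0) (a',b0) = gdist ?g a a'"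
    if "a \<in> X1" "a' \<in> X1" for a a'
    using induced_cp_gdist[of a b0 X1 X2 G a' H b0] cg[OF that] ch0 b0 that
    by (simp add: gdist_refl)
  have thick: "\<forall>u\<in>X1. \<forall>v\<in>X1. gdist ?g u v = 2 \<longrightarrow>
        (\<exists>w\<in>X1. \<exists>w'\<in>X1. ?g u w \<and> ?g w v \<and> ?g u w' \<and> ?g w' v \<and> gdist ?g w w' = 2)"
  proof (intro ballI impI)
    fix u v assume u: "u \<in> X1" and v: "v \<in> X1" and d2: "gdist ?g u v = 2"
    have uv: "u \<noteq> v" using d2 by (auto simp: gdist_refl)
    have "gdist ?R (u,b0) (v,b0) = 2" using D u v d2 by simp
    moreover have "(u,b0) \<in> X" "(v,b0) \<in> X" using XA u v b0 by auto
    ultimately obtain w w' where w: "w \<in> ?A" "w' \<in> ?A" "?R (u,b0) w" "?R w (v,b0)"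
       "?R (u,b0) w'" "?R w' (v,b0)" "gdist ?R w w' = 2"
      using cX XA unfolding connected_thick_on_def by metis
    obtain c d where cd: "w = (c,d)" by (cases w)
    obtain c' d' where cd': "w' = (c',d')" by (cases w')
    have 1: "d = b0 \<and> G u c \<and> G c v"
      by (rule cp_irr_step[OF G H _ _ uv]) (use w cd in \<open>auto simp: induced_def\<close>)
    have 2: "d' = b0 \<and> G u c' \<and> G c' v"
      by (rule cp_irr_step[OF G H _ _ uv]) (use w cd' in \<open>auto simp: induced_def\<close>)
    have c: "c \<in> X1" "c' \<in> X1" using w cd cd' by auto
    have "gdist ?g c c' = 2" using D[OF c] w(7) cd cd' 1 2 by simp
    then show "\<exists>w\<in>X1. \<exists>w'\<in>X1. ?g u w \<and> ?g w v \<and> ?g u w' \<and> ?g w' v \<and> gdist ?g w w' = 2"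
      using c 1 2 u v by (auto simp: induced_def)
  qed
  show ?thesis unfolding X1_def[symmetric] boolean_gated_def connected_thick_on_def
    using gated cg thick by blast
qed


lemma proj_snd:
  assumes G: "graph G" and H: "graph H" and B: "boolean_gated (cartesian_prod G H) X"
  shows "boolean_gated H (snd ` X)"
proof -
  define X1 where "X1 = fst ` X"
  define X2 where "X2 = snd ` X"
  let ?A = "X1 \<times> X2"
  let ?R = "induced (cartesian_prod G H) ?A"
  let ?g = "induced G X1" and ?h = "induced H X2"
  have gX: "gated (cartesian_prod G H) X" and cX: "connected_thick_on (cartesian_prod G H) X"
    using B by (auto simp: boolean_gated_def)
  have XA: "X = ?A" using gated_prod_eq[OF G H gX] unfolding X1_def X2_def .
  have ne: "X \<noteq> {}" using gX by (auto simp: gated_def)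
  then obtain a0 where a0: "a0 \<in> X1" unfolding X1_def by auto
  have gated: "gated H X2"
    unfolding gated_def
  proof (intro conjI allI)
    show "X2 \<noteq> {}" using ne unfolding X2_def by auto
  next
    fix x1
    obtain y where y: "y \<in> X" "\<forall>z\<in>X. gdist (cartesian_prod G H) (a0,x1) z
        = gdist (cartesian_prod G H) (a0,x1) y + gdist (cartesian_prod G H) y z"
      using gX unfolding gated_def by blast
    obtain y1 y2 where yy: "y = (y2,y1)" by (cases y)
    have y1: "y1 \<in> X2" using y(1) yy unfolding X2_def by force
    show "\<exists>y\<in>X2. \<forall>z\<in>X2. gdist H x1 z = gdist H x1 y + gdist H y z"
    proof (intro bexI[OF _ y1] ballI)
      fix z assume z: "z \<in> X2"
      then have "(a0,z) \<in> X" using XA a0 by simp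
      then have "gdist (cartesian_prod G H) (a0,x1) (a0,z) = gdist (cartesian_prod G H) (a0,x1) (y2,y1)
          + gdist (cartesian_prod G H) (y2,y1) (a0,z)" using y(2) yy by blast
      then have e: "gdist H x1 z = gdist H x1 y1 + gdist G a0 y2 + gdist H y1 z + gdist G y2 a0"
        unfolding graph_gdist[OF G H] gdist_refl by simp
      have t: "gdist H x1 z \<le> gdist H x1 y1 + gdist H y1 z"
        by (rule gdist_tri) (use graph_conn[OF H] in auto)
      show "gdist H x1 z = gdist H x1 y1 + gdist H y1 z" using e t by linarith
    qed
  qed
  have cR: "\<exists>n. (?R ^^ n) u v" if "u \<in> ?A" "v \<in> ?A" for u v
    using cX that XA unfolding connected_thick_on_def by auto
  have ch: "\<exists>n. (?h ^^ n) u v" if u: "u \<in> X2" and v: "v \<in> X2" for u v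
  proof -
    obtain n where "(?R ^^ n) (a0,u) (a0,v)" using cR u v a0 by blast
    then have "(cartesian_prod ?g ?h ^^ n) (a0,u) (a0,v)"
      using induced_cp_pow[of "(a0,u)" X1 X2 n G H "(a0,v)"] u a0 by simp
    then show ?thesis using cp_pow_split by fastforce
  qed
  have cg0: "\<exists>n. (?g ^^ n) a0 a0" by (rule exI[of _ 0]) simp
  have D: "gdist ?R (a0,a) (a0,a') = gdist ?h a a'"
    if "a \<in> X2" "a' \<in> X2" for a a'
    using induced_cp_gdist[of a0 a X1 X2 G a0 H a'] ch[OF that] cg0 a0 that
    by (simp add: gdist_refl)
  have thick: "\<forall>u\<in>X2. \<forall>v\<in>X2. gdist ?h u v = 2 \<longrightarrow>
        (\<exists>w\<in>X2. \<exists>w'\<in>X2. ?h u w \<and> ?h w v \<and> ?h u w' \<and> ?h w' v \<and> gdist ?h w w' = 2)"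
  proof (intro ballI impI)
    fix u v assume u: "u \<in> X2" and v: "v \<in> X2" and d2: "gdist ?h u v = 2"
    have uv: "u \<noteq> v" using d2 by (auto simp: gdist_refl)
    have "gdist ?R (a0,u) (a0,v) = 2" using D u v d2 by simp
    moreover have "(a0,u) \<in> X" "(a0,v) \<in> X" using XA u v a0 by auto
    ultimately obtain w w' where w: "w \<in> ?A" "w' \<in> ?A" "?R (a0,u) w" "?R w (a0,v)"
       "?R (a0,u) w'" "?R w' (a0,v)" "gdist ?R w w' = 2"
      using cX XA unfolding connected_thick_on_def by metis
    obtain c d where cd: "w = (d,c)" by (cases w)
    obtain c' d' where cd': "w' = (d',c')" by (cases w')
    have 1: "d = a0 \<and> H u c \<and> H c v"
      by (rule cp_irr_step2[OF G H _ _ uv]) (use w cd in \<open>auto simp: induced_def\<close>)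
    have 2: "d' = a0 \<and> H u c' \<and> H c' v"
      by (rule cp_irr_step2[OF G H _ _ uv]) (use w cd' in \<open>auto simp: induced_def\<close>)
    have c: "c \<in> X2" "c' \<in> X2" using w cd cd' by auto
    have "gdist ?h c c' = 2" using D[OF c] w(7) cd cd' 1 2 by simp
    then show "\<exists>w\<in>X2. \<exists>w'\<in>X2. ?h u w \<and> ?h w v \<and> ?h u w' \<and> ?h w' v \<and> gdist ?h w w' = 2"
      using c 1 2 u v by (auto simp: induced_def)
  qed
  show ?thesis unfolding X2_def[symmetric] boolean_gated_def connected_thick_on_def
    using gated ch thick by blast
qed

lemma singleton_bg: "boolean_gated E {x}"
  unfolding boolean_gated_def gated_def connected_thick_on_def
  by (auto simp: gdist_refl intro: exI[of _ 0])

lemma swm_graph_graph: "swm_graph G \<Longrightarrow> graph G"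
  unfolding swm_graph_def weakly_modular_def by blast

theorem lemma2p18:
  fixes G :: "'a \<Rightarrow> 'a \<Rightarrow> bool" and H :: "'b \<Rightarrow> 'b \<Rightarrow> bool"
  assumes "swm_graph G" and "swm_graph H"
  shows "thickening (cartesian_prod G H) = strong_prod (thickening G) (thickening H)"
proof (intro ext iffI)
  have G: "graph G" and H: "graph H" using assms swm_graph_graph by auto
  fix p q
  {
    assume "thickening (cartesian_prod G H) p q"
    then obtain X where pq: "p \<noteq> q" "boolean_gated (cartesian_prod G H) X" "p \<in> X" "q \<in> X"
      unfolding thickening_def by blast
    have b1: "boolean_gated G (fst ` X)" and b2: "boolean_gated H (snd ` X)"
      using proj_fst[OF G H pq(2)] proj_snd[OF G H pq(2)] by auto
    have m: "fst p \<in> fst ` X" "fst q \<in> fst ` X" "snd p \<in> snd ` X" "snd q \<in> snd ` X"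
      using pq by auto
    have "fst p = fst q \<or> thickening G (fst p) (fst q)"
      unfolding thickening_def using b1 m by blast
    moreover have "snd p = snd q \<or> thickening H (snd p) (snd q)"
      unfolding thickening_def using b2 m by blast
    ultimately show "strong_prod (thickening G) (thickening H) p q"
      unfolding strong_prod_def using pq(1) by blast
  }
  {
    assume s: "strong_prod (thickening G) (thickening H) p q"
    obtain X1 where X1: "boolean_gated G X1" "fst p \<in> X1" "fst q \<in> X1"
    proof (cases "fst p = fst q")
      case True then show ?thesis using that[OF singleton_bg[of G "fst p"]] by simp
    next
      case False
      then have "thickening G (fst p) (fst q)" using s unfolding strong_prod_def by blast
      then show ?thesis using that unfolding thickening_def by blast
    qed
    obtain X2 where X2: "boolean_gated H X2" "snd p \<in> X2" "snd q \<in> X2"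
    proof (cases "snd p = snd q")
      case True then show ?thesis using that[OF singleton_bg[of H "snd p"]] by simp
    next
      case False
      then have "thickening H (snd p) (snd q)" using s unfolding strong_prod_def by blast
      then show ?thesis using that unfolding thickening_def by blast
    qed
    have "boolean_gated (cartesian_prod G H) (X1 \<times> X2)" using prod_bg[OF G H X1(1) X2(1)] .
    moreover have "p \<in> X1 \<times> X2" "q \<in> X1 \<times> X2" using X1 X2 by (auto simp: mem_Times_iff)
    moreover have "p \<noteq> q" using s unfolding strong_prod_def by blast
    ultimately show "thickening (cartesian_prod G H) p q" unfolding thickening_def by blast
  }
qed

end
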